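(* Consider ${\sf BubbleRank}$ (defined below) run with parameter $\delta\in(0,1)$ in a stochastic click bandit satisfying A1–A5 with $\alpha(1)>\dots>\alpha(K)>0$. For $t\in[n]$ let $$\mathbf{P}_t=\{(i,j)\in[K]^2: i<j,\ |\bar{\mathbf{R}}_t^{-1}(i)-\bar{\mathbf{R}}_t^{-1}(j)|=1,\ \mathbf{s}_{t-1}(i,j)\le2\sqrt{\mathbf{n}_{t-1}(i,j)\log(1/\delta)}\}$$ and let $\mathbf{\Delta}_t$ be the maximum of the attraction gap $\Delta(\mathcal{R})$ over all lists $\mathcal{R}$ that ${\sf BubbleRank}$ may display at time $t$ (over its randomization). Then on the event $\mathcal{E}$ defined below, for every $t\in[n]$, $$\mathbf{\Delta}_t\le3\sum_{i=1}^K\sum_{j=i+1}^K\mathbb{1}\{(i,j)\in\mathbf{P}_t\}(\alpha(i)-\alpha(j)).$$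
   Context: Model. Items $[K]$; a list $\mathcal{R}$ orders all $K$ items, $\mathcal{R}(k)$ is the item at position $k$, $\mathcal{R}^{-1}(i)$ the position of $i$; $\Pi_K$ the set of lists. At time $t$, $(\mathbf{A}_t,\mathbf{X}_t)\in\{0,1\}^K\times\{0,1\}^{\Pi_K\times[K]}$ is drawn i.i.d. from a product distribution; the learner displays $\mathbf{R}_t$ and observes $\mathbf{c}_t(k)=\mathbf{X}_t(\mathbf{R}_t,k)\mathbf{A}_t(\mathbf{R}_t(k))$. $\alpha=\mathbb{E}[\mathbf{A}_t]$, $\chi=\mathbb{E}[\mathbf{X}_t]$, $r(\mathcal{R},\alpha,\chi)=\sum_k\chi(\mathcal{R},k)\alpha(\mathcal{R}(k))$, $\mathcal{R}^*=(1,\dots,K)$. Assumptions for all lists $\mathcal{R},\mathcal{R}'$ and positions $k<\ell$: (A1) $r(\mathcal{R},\alpha,\chi)\le r(\mathcal{R}^*,\alpha,\chi)$; (A2) $\{\mathcal{R}(1..k-1)\}=\{\mathcal{R}'(1..k-1)\}\Rightarrow\chi(\mathcal{R},k)=\chi(\mathcal{R}',k)$; (A3) $\chi(\mathcal{R},k)\ge\chi(\mathcal{R},\ell)$; (A4) if $\mathcal{R},\mathcal{R}'$ differ only by exchanging items at positions $k,\ell$, then $\alpha(\mathcal{R}(k))\le\alpha(\mathcal{R}(\ell))\iff\chi(\mathcal{R},\ell)\ge\chi(\mathcal{R}',\ell)$; (A5) $\chi(\mathcal{R},k)\ge\chi(\mathcal{R}^*,k)$. Attraction gap: $\Delta(\mathcal{R})=\sum_{k=1}^{K-1}\max\{\alpha(\mathcal{R}(k+1))-\alpha(\mathcal{R}(k)),0\}$.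 Algorithm ${\sf BubbleRank}$ (initial list $\mathcal{R}_0$, horizon $n$): $\mathbf{s}_0\equiv\mathbf{n}_0\equiv0$, $\bar{\mathbf{R}}_1=\mathcal{R}_0$. For $t=1,\dots,n$: $h=t\bmod2$, $\mathbf{R}_t\leftarrow\bar{\mathbf{R}}_t$; for $k=1,\dots,\lfloor(K-h)/2\rfloor$ with $i=\mathbf{R}_t(2k-1+h)$, $j=\mathbf{R}_t(2k+h)$: if $\mathbf{s}_{t-1}(i,j)\le2\sqrt{\mathbf{n}_{t-1}(i,j)\log(1/\delta)}$ exchange these two positions with probability $1/2$. Display $\mathbf{R}_t$, observe $\mathbf{c}_t$. $\mathbf{s}_t=\mathbf{s}_{t-1}$, $\mathbf{n}_t=\mathbf{n}_{t-1}$; for each such $k$ with $i=\mathbf{R}_t(2k-1+h)$, $j=\mathbf{R}_t(2k+h)$: if $|\mathbf{c}_t(2k-1+h)-\mathbf{c}_t(2k+h)|=1$, add $\mathbf{c}_t(2k-1+h)-\mathbf{c}_t(2k+h)$ to $\mathbf{s}_t(i,j)$, its negative to $\mathbf{s}_t(j,i)$, and $1$ to $\mathbf{n}_t(i,j),\mathbf{n}_t(j,i)$. Then $\bar{\mathbf{R}}_{t+1}=\bar{\mathbf{R}}_t$; for $k=1,\dots,K-1$ in order with $i=\bar{\mathbf{R}}_{t+1}(k)$, $j=\bar{\mathbf{R}}_{t+1}(k+1)$: if $\mathbf{s}_t(j,i)>2\sqrt{\mathbf{n}_t(j,i)\log(1/\delta)}$ exchange positions $k,k+1$ of $\bar{\mathbf{R}}_{t+1}$.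 Event $\mathcal{E}=\bigcap_{t\in[n]}(\mathcal{E}_{t,1}\cap\mathcal{E}_{t,2})$, where $\mathcal{E}_{t,1}$: for all $i<j$, $\frac{\alpha(i)-\alpha(j)}{\alpha(i)+\alpha(j)}\mathbf{n}_t(i,j)-2\sqrt{\mathbf{n}_t(i,j)\log(1/\delta)}\le\mathbf{s}_t(i,j)$; and $\mathcal{E}_{t,2}$: for all $i>j$, $\mathbf{s}_t(i,j)\le2\sqrt{\mathbf{n}_t(i,j)\log(1/\delta)}$. *)

theory Defs
  imports Complex_Main "HOL-Combinatorics.Permutations"
begin

(* Items are 1..K, positions are 1..K.  A list R : positions -> items is a
   permutation of {1..K} (identity outside {1..K}); R^{-1} is inv R. *)
definition lists_K :: "nat \<Rightarrow> (nat \<Rightarrow> nat) set" where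
  "lists_K K = {R. R permutes {1..K}}"

definition reward :: "nat \<Rightarrow> (nat \<Rightarrow> real) \<Rightarrow> ((nat \<Rightarrow> nat) \<Rightarrow> nat \<Rightarrow> real) \<Rightarrow> (nat \<Rightarrow> nat) \<Rightarrow> real" where
  "reward K \<alpha> \<chi> R = (\<Sum>k=1..K. \<chi> R k * \<alpha> (R k))"

definition swap_pos :: "(nat \<Rightarrow> nat) \<Rightarrow> nat \<Rightarrow> nat \<Rightarrow> (nat \<Rightarrow> nat)" where
  "swap_pos R k l = R(k := R l, l := R k)"

definition thr :: "real \<Rightarrow> nat \<Rightarrow> real" where
  "thr \<delta> m = 2 * sqrt (real m * ln (1 / \<delta>))"

definition attr_gap :: "nat \<Rightarrow> (nat \<Rightarrow> real) \<Rightarrow> (nat \<Rightarrow> nat) \<Rightarrow> real" where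
  "attr_gap K \<alpha> R = (\<Sum>k=1..K-1. max (\<alpha> (R (k+1)) - \<alpha> (R k)) 0)"

(* The displayed list R_t, given h = t mod 2, the current list Rbar_t, the
   statistics s_{t-1}, n_{t-1} and the outcome of the fair coins
   (sel k = True iff the k-th coin says "exchange"). *)
definition display_list :: "nat \<Rightarrow> real \<Rightarrow> nat \<Rightarrow> (nat \<Rightarrow> nat) \<Rightarrow> (nat \<Rightarrow> nat \<Rightarrow> int)
    \<Rightarrow> (nat \<Rightarrow> nat \<Rightarrow> nat) \<Rightarrow> (nat \<Rightarrow> bool) \<Rightarrow> (nat \<Rightarrow> nat)" where
  "display_list K \<delta> h Rb s n sel =
     foldl (\<lambda>R k. let i = R (2*k - 1 + h); j = R (2*k + h) in
                 if real_of_int (s i j) \<le> thr \<delta> (n i j) \<and> sel k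
                 then swap_pos R (2*k - 1 + h) (2*k + h) else R)
           Rb [1..<(K - h) div 2 + 1]"

definition displayable :: "nat \<Rightarrow> real \<Rightarrow> nat \<Rightarrow> (nat \<Rightarrow> nat) \<Rightarrow> (nat \<Rightarrow> nat \<Rightarrow> int)
    \<Rightarrow> (nat \<Rightarrow> nat \<Rightarrow> nat) \<Rightarrow> (nat \<Rightarrow> nat) set" where
  "displayable K \<delta> h Rb s n = {display_list K \<delta> h Rb s n sel | sel. True}"

definition upd2 :: "('a \<Rightarrow> 'a \<Rightarrow> 'b) \<Rightarrow> 'a \<Rightarrow> 'a \<Rightarrow> 'b \<Rightarrow> ('a \<Rightarrow> 'a \<Rightarrow> 'b)" where
  "upd2 f i j v = f(i := (f i)(j := v))"

definition update_stats :: "nat \<Rightarrow> nat \<Rightarrow> (nat \<Rightarrow> nat) \<Rightarrow> (nat \<Rightarrow> int)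
    \<Rightarrow> (nat \<Rightarrow> nat \<Rightarrow> int) \<times> (nat \<Rightarrow> nat \<Rightarrow> nat)
    \<Rightarrow> (nat \<Rightarrow> nat \<Rightarrow> int) \<times> (nat \<Rightarrow> nat \<Rightarrow> nat)" where
  "update_stats K h R c sn =
     foldl (\<lambda>(s, n) k. let p = 2*k - 1 + h; q = 2*k + h; i = R p; j = R q; d = c p - c q in
                 if \<bar>d\<bar> = 1
                 then (upd2 (upd2 s i j (s i j + d)) j i (s j i - d),
                       upd2 (upd2 n i j (n i j + 1)) j i (n j i + 1))
                 else (s, n))
           sn [1..<(K - h) div 2 + 1]"

definition bubble_pass :: "nat \<Rightarrow> real \<Rightarrow> (nat \<Rightarrow> nat \<Rightarrow> int) \<Rightarrow> (nat \<Rightarrow> nat \<Rightarrow> nat)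
    \<Rightarrow> (nat \<Rightarrow> nat) \<Rightarrow> (nat \<Rightarrow> nat)" where
  "bubble_pass K \<delta> s n Rb =
     foldl (\<lambda>R k. let i = R k; j = R (Suc k) in
                 if real_of_int (s j i) > thr \<delta> (n j i) then swap_pos R k (Suc k) else R)
           Rb [1..<K]"

(* Trajectory of BubbleRank.  coin u k: outcome of the fair coin for pair k at time u;
   A u i = A_u(i); X u R k = X_u(R, k).
   traj ... t = (Rbar_{t+1}, s_t, n_t). *)
fun traj :: "nat \<Rightarrow> real \<Rightarrow> (nat \<Rightarrow> nat) \<Rightarrow> (nat \<Rightarrow> nat \<Rightarrow> bool) \<Rightarrow> (nat \<Rightarrow> nat \<Rightarrow> bool)
    \<Rightarrow> (nat \<Rightarrow> (nat \<Rightarrow> nat) \<Rightarrow> nat \<Rightarrow> bool) \<Rightarrow> nat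
    \<Rightarrow> (nat \<Rightarrow> nat) \<times> (nat \<Rightarrow> nat \<Rightarrow> int) \<times> (nat \<Rightarrow> nat \<Rightarrow> nat)" where
  "traj K \<delta> R0 coin A X 0 = (R0, (\<lambda>_ _. 0), (\<lambda>_ _. 0))"
| "traj K \<delta> R0 coin A X (Suc t) =
     (let (Rb, s, n) = traj K \<delta> R0 coin A X t;
          u = Suc t;
          h = u mod 2;
          R = display_list K \<delta> h Rb s n (coin u);
          c = (\<lambda>k. if X u R k \<and> A u (R k) then 1 else 0 :: int);
          (s', n') = update_stats K h R c (s, n)
      in (bubble_pass K \<delta> s' n' Rb, s', n'))"

definition Rbar_at where "Rbar_at K \<delta> R0 coin A X t = fst (traj K \<delta> R0 coin A X (t - 1))"
definition s_at where "s_at K \<delta> R0 coin A X t = fst (snd (traj K \<delta> R0 coin A X t))"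
definition n_at where "n_at K \<delta> R0 coin A X t = snd (snd (traj K \<delta> R0 coin A X t))"

definition event_E :: "nat \<Rightarrow> real \<Rightarrow> (nat \<Rightarrow> real) \<Rightarrow> nat
    \<Rightarrow> (nat \<Rightarrow> nat \<Rightarrow> nat \<Rightarrow> int) \<Rightarrow> (nat \<Rightarrow> nat \<Rightarrow> nat \<Rightarrow> nat) \<Rightarrow> bool" where
  "event_E K \<delta> \<alpha> N s n \<longleftrightarrow>
     (\<forall>t\<in>{1..N}.
        (\<forall>i\<in>{1..K}. \<forall>j\<in>{1..K}. i < j \<longrightarrow>
           (\<alpha> i - \<alpha> j) / (\<alpha> i + \<alpha> j) * real (n t i j) - thr \<delta> (n t i j) \<le> real_of_int (s t i j)) \<and>
        (\<forall>i\<in>{1..K}. \<forall>j\<in>{1..K}. i > j \<longrightarrow>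
           real_of_int (s t i j) \<le> thr \<delta> (n t i j)))"

(* the set P_t, given Rbar_t, s_{t-1}, n_{t-1} *)
definition P_set :: "nat \<Rightarrow> real \<Rightarrow> (nat \<Rightarrow> nat) \<Rightarrow> (nat \<Rightarrow> nat \<Rightarrow> int) \<Rightarrow> (nat \<Rightarrow> nat \<Rightarrow> nat)
    \<Rightarrow> (nat \<times> nat) set" where
  "P_set K \<delta> Rb s n = {(i, j). i \<in> {1..K} \<and> j \<in> {1..K} \<and> i < j \<and>
      \<bar>int (inv Rb i) - int (inv Rb j)\<bar> = 1 \<and> real_of_int (s i j) \<le> thr \<delta> (n i j)}"

end

theory Submission
  imports Defs
begin

lemma swap_pos_o: "swap_pos R k l = R \<circ> transpose k l"
  by (auto simp: swap_pos_def transpose_def fun_eq_iff)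

definition dstep :: "real \<Rightarrow> nat \<Rightarrow> (nat \<Rightarrow> nat \<Rightarrow> int) \<Rightarrow> (nat \<Rightarrow> nat \<Rightarrow> nat) \<Rightarrow> (nat \<Rightarrow> bool) \<Rightarrow> (nat \<Rightarrow> nat) \<Rightarrow> nat \<Rightarrow> (nat \<Rightarrow> nat)" where
  "dstep \<delta> h s n sel = (\<lambda>R k. let i = R (2*k - 1 + h); j = R (2*k + h) in
                 if real_of_int (s i j) \<le> thr \<delta> (n i j) \<and> sel k
                 then swap_pos R (2*k - 1 + h) (2*k + h) else R)"

lemma display_dstep: "display_list K \<delta> h Rb s n sel = foldl (dstep \<delta> h s n sel) Rb [1..<(K - h) div 2 + 1]"
  unfolding display_list_def dstep_def ..

definition Psw where
  "Psw \<delta> h Rb s n sel k = (real_of_int (s (Rb (2*k-1+h)) (Rb (2*k+h))) \<le> thr \<delta> (n (Rb (2*k-1+h)) (Rb (2*k+h))) \<and> sel k)"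

fun tau :: "nat \<Rightarrow> nat \<Rightarrow> (nat \<Rightarrow> bool) \<Rightarrow> nat \<Rightarrow> nat" where
  "tau h 0 P = id"
| "tau h (Suc a) P = tau h a P \<circ> (if P (Suc a) then transpose (Suc (2*a+h)) (Suc (Suc (2*a+h))) else id)"

lemma tau_fix: "m > 2*a+h \<Longrightarrow> tau h a P m = m"
  by (induction a arbitrary: m) auto

lemma disp_tau: "foldl (dstep \<delta> h s n sel) Rb [1..<a+1] = Rb \<circ> tau h a (Psw \<delta> h Rb s n sel)"
proof (induction a)
  case 0
  then show ?case by auto
next
  case (Suc a)
  let ?P = "Psw \<delta> h Rb s n sel"
  have e: "[1..<Suc a+1] = [1..<a+1] @ [Suc a]" by simp
  have f1: "tau h a ?P (Suc (2*a + h)) = Suc (2*a + h)" by (rule tau_fix) simp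
  have f2: "tau h a ?P (Suc (Suc (2*a + h))) = Suc (Suc (2*a + h))" by (rule tau_fix) simp
  have g: "foldl (dstep \<delta> h s n sel) Rb [1..<Suc a+1] = dstep \<delta> h s n sel (Rb \<circ> tau h a ?P) (Suc a)"
    unfolding e foldl_append Suc by simp
  show ?case
  proof (cases "?P (Suc a)")
    case True
    then have "dstep \<delta> h s n sel (Rb \<circ> tau h a ?P) (Suc a) = swap_pos (Rb \<circ> tau h a ?P) (Suc (2*a + h)) (Suc (Suc (2*a + h)))"
      by (simp add: dstep_def Let_def f1 f2 Psw_def)
    also have "\<dots> = Rb \<circ> tau h (Suc a) ?P"
      using True by (simp add: swap_pos_o o_assoc)
    finally show ?thesis using g by simp
  next
    case False
    then have "dstep \<delta> h s n sel (Rb \<circ> tau h a ?P) (Suc a) = Rb \<circ> tau h a ?P"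
      by (auto simp add: dstep_def Let_def f1 f2 Psw_def)
    also have "\<dots> = Rb \<circ> tau h (Suc a) ?P"
      using False by simp
    finally show ?thesis using g by simp
  qed
qed

lemma tau_permutes: "2*a+h \<le> K \<Longrightarrow> tau h a P permutes {1..K}"
proof (induction a)
  case 0 then show ?case by (metis tau.simps(1) permutes_id)
next
  case (Suc a)
  have T: "(if P (Suc a) then transpose (Suc (2*a+h)) (Suc (Suc (2*a+h))) else id) permutes {1..K}"
    using Suc.prems by (auto intro!: permutes_swap_id simp: permutes_id)
  have IH: "tau h a P permutes {1..K}" using Suc by simp
  show ?case unfolding tau.simps by (rule permutes_compose[OF T IH])
qed

lemma tau_range: "tau h a P m \<le> m + 1 \<and> m \<le> tau h a P m + 1"
proof (induction a arbitrary: m)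
  case 0 then show ?case by simp
next
  case (Suc a)
  show ?case
  proof (cases "P (Suc a) \<and> (m = Suc (2*a+h) \<or> m = Suc (Suc (2*a+h)))")
    case True
    then show ?thesis using tau_fix[of a h "Suc (2*a+h)" P] tau_fix[of a h "Suc (Suc (2*a+h))" P] by auto
  next
    case False
    then have "tau h (Suc a) P m = tau h a P m" by (auto simp: transpose_def)
    then show ?thesis using Suc by simp
  qed
qed

lemma tau_up: "tau h a P m = m + 1 \<Longrightarrow> \<exists>k. 1 \<le> k \<and> k \<le> a \<and> P k \<and> m = 2*k-1+h"
proof (induction a arbitrary: m)
  case 0 then show ?case by simp
next
  case (Suc a)
  show ?case
  proof (cases "P (Suc a) \<and> (m = Suc (2*a+h) \<or> m = Suc (Suc (2*a+h)))")
    case True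
    then have "m = Suc (2*a+h)"
      using Suc.prems tau_fix[of a h "Suc (2*a+h)" P] tau_fix[of a h "Suc (Suc (2*a+h))" P] by auto
    then show ?thesis using True by (intro exI[of _ "Suc a"]) auto
  next
    case False
    then have "tau h (Suc a) P m = tau h a P m" by (auto simp: transpose_def)
    then show ?thesis using Suc by force
  qed
qed

lemma tau_pair: "1 \<le> k \<Longrightarrow> k \<le> a \<Longrightarrow>
   (tau h a P (2*k-1+h) = 2*k-1+h \<and> tau h a P (2*k+h) = 2*k+h) \<or>
   (tau h a P (2*k-1+h) = 2*k+h \<and> tau h a P (2*k+h) = 2*k-1+h)"
proof (induction a)
  case 0 then show ?case by simp
next
  case (Suc a)
  show ?case
  proof (cases "k = Suc a")
    case True
    then show ?thesis using tau_fix[of a h "Suc (2*a+h)" P] tau_fix[of a h "Suc (Suc (2*a+h))" P] by auto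
  next
    case False
    then have k: "k \<le> a" using Suc.prems by simp
    have "2*k-1+h \<noteq> Suc (2*a+h) \<and> 2*k-1+h \<noteq> Suc (Suc (2*a+h)) \<and> 2*k+h \<noteq> Suc (2*a+h) \<and> 2*k+h \<noteq> Suc (Suc (2*a+h))"
      using k by linarith
    then show ?thesis using Suc.IH[OF Suc.prems(1) k] by (auto simp: transpose_def)
  qed
qed

definition ustep :: "nat \<Rightarrow> (nat \<Rightarrow> nat) \<Rightarrow> (nat \<Rightarrow> int)
    \<Rightarrow> (nat \<Rightarrow> nat \<Rightarrow> int) \<times> (nat \<Rightarrow> nat \<Rightarrow> nat) \<Rightarrow> nat
    \<Rightarrow> (nat \<Rightarrow> nat \<Rightarrow> int) \<times> (nat \<Rightarrow> nat \<Rightarrow> nat)" where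
  "ustep h R c = (\<lambda>(s, n) k. let p = 2*k - 1 + h; q = 2*k + h; i = R p; j = R q; d = c p - c q in
                 if \<bar>d\<bar> = 1
                 then (upd2 (upd2 s i j (s i j + d)) j i (s j i - d),
                       upd2 (upd2 n i j (n i j + 1)) j i (n j i + 1))
                 else (s, n))"

lemma update_ustep: "update_stats K h R c sn = foldl (ustep h R c) sn [1..<(K - h) div 2 + 1]"
  unfolding update_stats_def ustep_def ..

lemma upd2_other: "\<not> (a = i \<and> b = j) \<Longrightarrow> upd2 f i j v a b = f a b"
  by (auto simp: upd2_def)

lemma ustep_frame:
  assumes "\<not> ((a = R (2*k-1+h) \<and> b = R (2*k+h)) \<or> (a = R (2*k+h) \<and> b = R (2*k-1+h)))"
  shows "fst (ustep h R c sn k) a b = fst sn a b \<and> snd (ustep h R c sn k) a b = snd sn a b"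
  using assms by (cases sn) (auto simp: ustep_def Let_def upd2_other)

lemma ufold_frame:
  assumes "\<forall>k\<in>set ks. \<not> ((a = R (2*k-1+h) \<and> b = R (2*k+h)) \<or> (a = R (2*k+h) \<and> b = R (2*k-1+h)))"
  shows "fst (foldl (ustep h R c) sn ks) a b = fst sn a b \<and> snd (foldl (ustep h R c) sn ks) a b = snd sn a b"
  using assms
proof (induction ks arbitrary: sn)
  case Nil then show ?case by simp
next
  case (Cons k ks)
  have "fst (ustep h R c sn k) a b = fst sn a b \<and> snd (ustep h R c sn k) a b = snd sn a b"
    using Cons.prems by (intro ustep_frame) auto
  then show ?case using Cons.IH[of "ustep h R c sn k"] Cons.prems by simp
qed

definition bstep :: "real \<Rightarrow> (nat \<Rightarrow> nat \<Rightarrow> int) \<Rightarrow> (nat \<Rightarrow> nat \<Rightarrow> nat) \<Rightarrow> (nat \<Rightarrow> nat) \<Rightarrow> nat \<Rightarrow> (nat \<Rightarrow> nat)" where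
  "bstep \<delta> s n = (\<lambda>R k. let i = R k; j = R (Suc k) in
                 if real_of_int (s j i) > thr \<delta> (n j i) then swap_pos R k (Suc k) else R)"

lemma bubble_bstep: "bubble_pass K \<delta> s n Rb = foldl (bstep \<delta> s n) Rb [1..<K]"
  unfolding bubble_pass_def bstep_def ..

lemma bstep_perm: "R permutes {1..K} \<Longrightarrow> 1 \<le> k \<Longrightarrow> Suc k \<le> K \<Longrightarrow> bstep \<delta> s n R k permutes {1..K}"
proof -
  assume R: "R permutes {1..K}" and k: "1 \<le> k" "Suc k \<le> K"
  have T: "transpose k (Suc k) permutes {1..K}" by (rule permutes_swap_id) (use k in auto)
  show ?thesis unfolding bstep_def Let_def swap_pos_o using permutes_compose[OF T R] R by simp
qed

lemma perm_range: "R permutes {1..K} \<Longrightarrow> 1 \<le> m \<Longrightarrow> m \<le> K \<Longrightarrow> 1 \<le> R m \<and> R m \<le> K"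
  using permutes_in_image[of R "{1..K}" m] by auto

lemma bfold_perm: "R permutes {1..K} \<Longrightarrow> \<forall>k\<in>set ks. 1 \<le> k \<and> Suc k \<le> K \<Longrightarrow> foldl (bstep \<delta> s n) R ks permutes {1..K}"
proof (induction ks arbitrary: R)
  case Nil then show ?case by simp
next
  case (Cons k ks)
  have "bstep \<delta> s n R k permutes {1..K}" using Cons.prems by (intro bstep_perm) auto
  then show ?case using Cons by simp
qed

lemma bstep_frame: "m \<noteq> k \<Longrightarrow> m \<noteq> Suc k \<Longrightarrow> bstep \<delta> s n R k m = R m"
  unfolding bstep_def Let_def swap_pos_def by auto

lemma bfold_frame: "\<forall>k\<in>set ks. Suc k < m \<Longrightarrow> foldl (bstep \<delta> s n) R ks m = R m"
  by (induction ks arbitrary: R) (auto simp: bstep_frame)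

definition invd :: "nat \<Rightarrow> (nat \<Rightarrow> nat) \<Rightarrow> nat \<Rightarrow> nat \<Rightarrow> bool" where
  "invd K R a b = (\<exists>p q. 1 \<le> p \<and> p < q \<and> q \<le> K \<and> R p = a \<and> R q = b \<and> b < a)"

definition E2 :: "nat \<Rightarrow> real \<Rightarrow> (nat \<Rightarrow> nat \<Rightarrow> int) \<Rightarrow> (nat \<Rightarrow> nat \<Rightarrow> nat) \<Rightarrow> bool" where
  "E2 K \<delta> s n = (\<forall>i\<in>{1..K}. \<forall>j\<in>{1..K}. i > j \<longrightarrow> real_of_int (s i j) \<le> thr \<delta> (n i j))"

lemma bstep_invd:
  assumes R: "R permutes {1..K}" and k: "1 \<le> k" "Suc k \<le> K" and E: "E2 K \<delta> s n"
    and I: "invd K (bstep \<delta> s n R k) a b"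
  shows "invd K R a b"
proof (cases "real_of_int (s (R (Suc k)) (R k)) > thr \<delta> (n (R (Suc k)) (R k))")
  case False
  then show ?thesis using I by (simp add: bstep_def Let_def)
next
  case True
  let ?T = "transpose k (Suc k)"
  have B: "bstep \<delta> s n R k = R \<circ> ?T" using True by (simp add: bstep_def Let_def swap_pos_o)
  obtain p q where pq: "1 \<le> p" "p < q" "q \<le> K" "R (?T p) = a" "R (?T q) = b" "b < a"
    using I unfolding invd_def B by auto
  show ?thesis
  proof (cases "p = k \<and> q = Suc k")
    case True
    then have "R (Suc k) = a" "R k = b" using pq by auto
    moreover have "R k \<in> {1..K}" "R (Suc k) \<in> {1..K}"
      using k R perm_range[of R K k] perm_range[of R K "Suc k"] by auto
    ultimately have "real_of_int (s (R (Suc k)) (R k)) \<le> thr \<delta> (n (R (Suc k)) (R k))"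
      using E pq(6) unfolding E2_def by auto
    then show ?thesis using \<open>thr \<delta> _ < _\<close> by simp
  next
    case False
    have "1 \<le> ?T p \<and> ?T p < ?T q \<and> ?T q \<le> K"
      using False pq(1-3) k by (auto simp: transpose_def)
    then show ?thesis unfolding invd_def using pq by blast
  qed
qed

lemma bfold_invd:
  assumes "R permutes {1..K}" "\<forall>k\<in>set ks. 1 \<le> k \<and> Suc k \<le> K" "E2 K \<delta> s n"
    "invd K (foldl (bstep \<delta> s n) R ks) a b"
  shows "invd K R a b"
  using assms
proof (induction ks arbitrary: R)
  case Nil then show ?case by simp
next
  case (Cons k ks)
  have P: "bstep \<delta> s n R k permutes {1..K}" using Cons.prems by (intro bstep_perm) auto
  have "invd K (bstep \<delta> s n R k) a b" using Cons.IH[OF P] Cons.prems by simp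
  then show ?case using bstep_invd[of R K k \<delta> s n a b] Cons.prems by auto
qed


definition InvP :: "nat \<Rightarrow> real \<Rightarrow> (nat \<Rightarrow> nat) \<Rightarrow> (nat \<Rightarrow> nat \<Rightarrow> int) \<Rightarrow> (nat \<Rightarrow> nat \<Rightarrow> nat) \<Rightarrow> bool" where
  "InvP K \<delta> R s n = (\<forall>a b. invd K R a b \<longrightarrow> real_of_int (s b a) \<le> thr \<delta> (n b a))"

lemma pass_inv:
  assumes Rb: "Rb permutes {1..K}" and I: "InvP K \<delta> Rb s n" and E: "E2 K \<delta> s' n'"
    and D: "\<And>k. 1 \<le> k \<Longrightarrow> k \<le> D \<Longrightarrow> 2*k + h \<le> K"
    and Fr: "\<And>a b. s' a b \<noteq> s a b \<or> n' a b \<noteq> n a b \<Longrightarrow>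
        (\<exists>k. 1 \<le> k \<and> k \<le> D \<and> ((a = Rb (2*k-1+h) \<and> b = Rb (2*k+h)) \<or> (a = Rb (2*k+h) \<and> b = Rb (2*k-1+h))))"
  shows "InvP K \<delta> (bubble_pass K \<delta> s' n' Rb) s' n'"
  unfolding InvP_def
proof (intro allI impI)
  fix a b
  let ?B = "bstep \<delta> s' n'"
  assume fin: "invd K (bubble_pass K \<delta> s' n' Rb) a b"
  have rng: "\<forall>k\<in>set [1..<K]. 1 \<le> k \<and> Suc k \<le> K" by auto
  have injRb: "inj Rb" using Rb by (rule permutes_inj)
  have ab: "invd K Rb a b"
    using bfold_invd[OF Rb rng E] fin unfolding bubble_bstep by blast
  then have H0: "real_of_int (s b a) \<le> thr \<delta> (n b a)" using I unfolding InvP_def by blast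
  obtain p q where pq: "1 \<le> p" "p < q" "q \<le> K" "Rb p = a" "Rb q = b" "b < a"
    using ab unfolding invd_def by blast
  show "real_of_int (s' b a) \<le> thr \<delta> (n' b a)"
  proof (rule ccontr)
    assume C: "\<not> real_of_int (s' b a) \<le> thr \<delta> (n' b a)"
    then have "s' b a \<noteq> s b a \<or> n' b a \<noteq> n b a" using H0 by auto
    then obtain k where k: "1 \<le> k" "k \<le> D"
      and kk: "(b = Rb (2*k-1+h) \<and> a = Rb (2*k+h)) \<or> (b = Rb (2*k+h) \<and> a = Rb (2*k-1+h))"
      using Fr by blast
    define m where "m = 2*k-1+h"
    have m1: "1 \<le> m" "Suc m \<le> K" "Suc m = 2*k+h" using k D unfolding m_def by auto
    have am: "a = Rb m" and bm: "b = Rb (Suc m)"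
    proof -
      have "\<not> (b = Rb m \<and> a = Rb (Suc m))"
      proof
        assume "b = Rb m \<and> a = Rb (Suc m)"
        then have "q = m" "p = Suc m" using pq injRb by (auto dest: injD)
        then show False using pq by simp
      qed
      then show "a = Rb m" "b = Rb (Suc m)" using kk m1(3) unfolding m_def by auto
    qed
    define R1 where "R1 = foldl ?B Rb [1..<m]"
    have R1: "R1 m = a \<and> R1 (Suc m) = b"
    proof (cases "m = 1")
      case True then show ?thesis unfolding R1_def using am bm by simp
    next
      case False
      then have m2: "2 \<le> m" using m1 by simp
      define R0 where "R0 = foldl ?B Rb [1..<m-1]"
      have split: "[1..<m] = [1..<m-1] @ [m-1]" using m2 upt_Suc_append[of 1 "m-1"] by simp
      have R1R0: "R1 = ?B R0 (m-1)" unfolding R1_def R0_def split by simp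
      have rng0: "\<forall>k\<in>set [1..<m-1]. 1 \<le> k \<and> Suc k \<le> K" using m1 by auto
      have R0p: "R0 permutes {1..K}" unfolding R0_def by (rule bfold_perm[OF Rb rng0])
      have f1: "\<forall>k\<in>set [1..<m-1]. Suc k < m" "\<forall>k\<in>set [1..<m-1]. Suc k < Suc m" by auto
      have R0m: "R0 m = a" "R0 (Suc m) = b" unfolding R0_def
        using bfold_frame[OF f1(1)] bfold_frame[OF f1(2)] am bm by auto
      define y where "y = R0 (m-1)"
      show ?thesis
      proof (cases "real_of_int (s' (R0 m) (R0 (m-1))) > thr \<delta> (n' (R0 m) (R0 (m-1)))")
        case False
        then have "R1 = R0" unfolding R1R0 bstep_def Let_def using m2 by simp
        then show ?thesis using R0m by simp
      next
        case True
        then have sw: "real_of_int (s' a y) > thr \<delta> (n' a y)" using R0m y_def by simp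
        have yr: "1 \<le> y \<and> y \<le> K" using perm_range[OF R0p, of "m-1"] m1 m2 y_def by auto
        have ar: "1 \<le> a \<and> a \<le> K" using perm_range[OF Rb, of m] m1 am by auto
        have "a \<noteq> y"
        proof
          assume "a = y"
          then have "R0 m = R0 (m-1)" using R0m(1) y_def by simp
          then have "m = m - 1" using permutes_inj[OF R0p] by (auto dest: injD)
          then show False using m2 by simp
        qed
        moreover have "\<not> a > y"
        proof
          assume "a > y"
          then have "real_of_int (s' a y) \<le> thr \<delta> (n' a y)" using E yr ar unfolding E2_def by simp
          then show False using sw by simp
        qed
        ultimately have ay: "a < y" by simp
        have "invd K R0 y a" unfolding invd_def
          using m1 m2 y_def R0m ay by (intro exI[of _ "m-1"] exI[of _ m]) auto
        then have "invd K Rb y a" using bfold_invd[OF Rb rng0 E] unfolding R0_def by blast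
        then have H1: "real_of_int (s a y) \<le> thr \<delta> (n a y)" using I unfolding InvP_def by blast
        have "s' a y = s a y \<and> n' a y = n a y"
        proof (rule ccontr)
          assume "\<not> (s' a y = s a y \<and> n' a y = n a y)"
          then obtain k' where k': "1 \<le> k'" "k' \<le> D"
            and kk': "(a = Rb (2*k'-1+h) \<and> y = Rb (2*k'+h)) \<or> (a = Rb (2*k'+h) \<and> y = Rb (2*k'-1+h))"
            using Fr by blast
          show False
          proof (cases "a = Rb (2*k'-1+h) \<and> y = Rb (2*k'+h)")
            case True
            then have "m = 2*k'-1+h" using am injRb by (auto dest: injD)
            moreover have "Suc (2*k'-1+h) = 2*k'+h" using k' by simp
            ultimately have "y = b" using True bm by simp
            then have "R0 (m-1) = R0 (Suc m)" using y_def R0m by simp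
            then show False using permutes_inj[OF R0p] m2 by (auto dest: injD)
          next
            case False
            then have "a = Rb (2*k'+h)" using kk' by auto
            then have "m = 2*k'+h" using am injRb by (auto dest: injD)
            then show False using m_def k k' by presburger
          qed
        qed
        then show ?thesis using sw H1 by simp
      qed
    qed
    define R2 where "R2 = ?B R1 m"
    have R2: "R2 m = b \<and> R2 (Suc m) = a"
      using R1 C unfolding R2_def bstep_def Let_def swap_pos_def by auto
    have R2p: "R2 permutes {1..K}" unfolding R2_def R1_def
      by (rule bstep_perm[OF bfold_perm[OF Rb]]) (use m1 in auto)
    have "[1..<K] = [1..<m] @ [m..<K]" using upt_add_eq_append[of 1 m "K-m"] m1 by simp
    moreover have "[m..<K] = m # [Suc m..<K]" using m1 by (simp add: upt_conv_Cons)
    ultimately have split2: "[1..<K] = [1..<m] @ m # [Suc m..<K]" by simp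
    have fin2: "bubble_pass K \<delta> s' n' Rb = foldl ?B R2 [Suc m..<K]"
      unfolding bubble_bstep split2 R2_def R1_def by simp
    have rng2: "\<forall>k\<in>set [Suc m..<K]. 1 \<le> k \<and> Suc k \<le> K" by auto
    have "invd K R2 a b"
      using bfold_invd[OF R2p rng2 E] fin unfolding fin2 by blast
    then obtain p' q' where "p' < q'" "R2 p' = a" "R2 q' = b" unfolding invd_def by blast
    then have "R2 p' = R2 (Suc m)" "R2 q' = R2 m" using R2 by auto
    then have "p' = Suc m" "q' = m" using permutes_inj[OF R2p] by (auto dest: injD)
    then show False using \<open>p' < q'\<close> by simp
  qed
qed

lemma disp_perm:
  assumes Rb: "Rb permutes {1..K}"
  shows "display_list K \<delta> h Rb s n sel permutes {1..K}"
proof -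
  let ?D = "(K - h) div 2"
  have eq: "display_list K \<delta> h Rb s n sel = Rb \<circ> tau h ?D (Psw \<delta> h Rb s n sel)"
    unfolding display_dstep disp_tau ..
  have "tau h ?D (Psw \<delta> h Rb s n sel) permutes {1..K}"
  proof (cases "?D = 0")
    case True then show ?thesis by (metis tau.simps(1) permutes_id)
  next
    case False then have "2 * ?D + h \<le> K" by linarith
    then show ?thesis by (rule tau_permutes)
  qed
  then show ?thesis unfolding eq using Rb by (rule permutes_compose)
qed

lemma step_inv:
  assumes Rb: "Rb permutes {1..K}" and I: "InvP K \<delta> Rb s n"
    and R: "R = display_list K \<delta> h Rb s n sel"
    and U: "update_stats K h R c (s, n) = (s', n')"
    and E: "E2 K \<delta> s' n'"
  shows "bubble_pass K \<delta> s' n' Rb permutes {1..K} \<and> InvP K \<delta> (bubble_pass K \<delta> s' n' Rb) s' n'"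
proof
  show "bubble_pass K \<delta> s' n' Rb permutes {1..K}"
    unfolding bubble_bstep by (rule bfold_perm[OF Rb]) auto
  let ?D = "(K - h) div 2"
  let ?P = "Psw \<delta> h Rb s n sel"
  have Rt: "R = Rb \<circ> tau h ?D ?P" unfolding R display_dstep disp_tau ..
  have D: "2*k + h \<le> K" if "1 \<le> k" "k \<le> ?D" for k using that by linarith
  show "InvP K \<delta> (bubble_pass K \<delta> s' n' Rb) s' n'"
  proof (rule pass_inv[OF Rb I E D])
    fix a b
    assume ch: "s' a b \<noteq> s a b \<or> n' a b \<noteq> n a b"
    have "\<exists>k\<in>set [1..<?D + 1]. ((a = R (2*k-1+h) \<and> b = R (2*k+h)) \<or> (a = R (2*k+h) \<and> b = R (2*k-1+h)))"
    proof (rule ccontr)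
      assume nt: "\<not> ?thesis"
      have nf: "\<forall>k\<in>set [1..<?D + 1]. \<not> ((a = R (2*k-1+h) \<and> b = R (2*k+h)) \<or> (a = R (2*k+h) \<and> b = R (2*k-1+h)))"
        using nt by blast
      have "fst (foldl (ustep h R c) (s, n) [1..<?D + 1]) a b = s a b \<and> snd (foldl (ustep h R c) (s, n) [1..<?D + 1]) a b = n a b"
        using ufold_frame[OF nf, of c "(s, n)"] by simp
      then show False using U ch unfolding update_ustep by simp
    qed
    then obtain k where k: "1 \<le> k" "k \<le> ?D"
      and kk: "(a = R (2*k-1+h) \<and> b = R (2*k+h)) \<or> (a = R (2*k+h) \<and> b = R (2*k-1+h))" by auto
    have "(a = Rb (2*k-1+h) \<and> b = Rb (2*k+h)) \<or> (a = Rb (2*k+h) \<and> b = Rb (2*k-1+h))"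
    proof (cases "tau h ?D ?P (2*k-1+h) = 2*k-1+h \<and> tau h ?D ?P (2*k+h) = 2*k+h")
      case True
      then have "R (2*k-1+h) = Rb (2*k-1+h)" "R (2*k+h) = Rb (2*k+h)" unfolding Rt by simp_all
      then show ?thesis using kk by (simp only:)
    next
      case False
      then have "tau h ?D ?P (2*k-1+h) = 2*k+h \<and> tau h ?D ?P (2*k+h) = 2*k-1+h"
        using tau_pair[OF k, of h ?P] by blast
      then have "R (2*k-1+h) = Rb (2*k+h)" "R (2*k+h) = Rb (2*k-1+h)" unfolding Rt by simp_all
      then show ?thesis using kk by (simp only:) blast
    qed
    then show "\<exists>k. 1 \<le> k \<and> k \<le> ?D \<and> ((a = Rb (2*k-1+h) \<and> b = Rb (2*k+h)) \<or> (a = Rb (2*k+h) \<and> b = Rb (2*k-1+h)))"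
      using k by blast
  qed
qed

lemma traj_inv:
  assumes R0: "R0 permutes {1..K}"
    and E: "\<And>u. 1 \<le> u \<Longrightarrow> u \<le> M \<Longrightarrow> E2 K \<delta> (s_at K \<delta> R0 coin A X u) (n_at K \<delta> R0 coin A X u)"
  shows "u \<le> M \<Longrightarrow> fst (traj K \<delta> R0 coin A X u) permutes {1..K} \<and>
      InvP K \<delta> (fst (traj K \<delta> R0 coin A X u)) (fst (snd (traj K \<delta> R0 coin A X u))) (snd (snd (traj K \<delta> R0 coin A X u)))"
proof (induction u)
  case 0
  have "InvP K \<delta> R0 (\<lambda>_ _. 0) (\<lambda>_ _. 0)" unfolding InvP_def by (simp add: thr_def)
  then show ?case using R0 by simp
next
  case (Suc u)
  obtain Rb s n where tr: "traj K \<delta> R0 coin A X u = (Rb, s, n)" by (cases "traj K \<delta> R0 coin A X u") auto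
  define h where "h = Suc u mod 2"
  define R where "R = display_list K \<delta> h Rb s n (coin (Suc u))"
  define c where "c = (\<lambda>k. if X (Suc u) R k \<and> A (Suc u) (R k) then 1 else 0 :: int)"
  obtain s' n' where U: "update_stats K h R c (s, n) = (s', n')" by (cases "update_stats K h R c (s, n)") auto
  have tr': "traj K \<delta> R0 coin A X (Suc u) = (bubble_pass K \<delta> s' n' Rb, s', n')"
    using tr U unfolding h_def R_def c_def by (simp add: Let_def)
  have IH: "Rb permutes {1..K} \<and> InvP K \<delta> Rb s n" using Suc tr by simp
  have "E2 K \<delta> s' n'" using E[of "Suc u"] Suc.prems tr' unfolding s_at_def n_at_def by simp
  then show ?case using step_inv[OF conjunct1[OF IH] conjunct2[OF IH] R_def U] tr' by simp
qed

lemma gap_bound: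
  fixes \<alpha> :: "nat \<Rightarrow> real"
  assumes Rb: "Rb permutes {1..K}" and I: "InvP K \<delta> Rb s n"
    and alpha_dec: "\<forall>i\<in>{1..K}. \<forall>j\<in>{1..K}. i < j \<longrightarrow> \<alpha> j < \<alpha> i"
    and R: "R = display_list K \<delta> h Rb s n sel"
  shows "attr_gap K \<alpha> R \<le> 3 * (\<Sum>i=1..K. \<Sum>j=i+1..K.
                 (if (i, j) \<in> P_set K \<delta> Rb s n then 1 else 0) * (\<alpha> i - \<alpha> j))"
proof -
  define g where "g i j = (if (i, j) \<in> P_set K \<delta> Rb s n then 1 else 0) * (\<alpha> i - \<alpha> j)" for i j
  define w where "w m = (if 1 \<le> m \<and> m < K then g (min (Rb m) (Rb (Suc m))) (max (Rb m) (Rb (Suc m))) else 0)" for m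
  have injRb: "inj Rb" using Rb by (rule permutes_inj)
  have rngRb: "1 \<le> Rb m \<and> Rb m \<le> K" if "1 \<le> m" "m \<le> K" for m using perm_range[OF Rb that] .
  have g0: "g i j \<ge> 0" for i j
    using alpha_dec unfolding g_def P_set_def by (auto simp: less_imp_le)
  have w0: "w m \<ge> 0" for m unfolding w_def using g0 by simp
  have invRb: "inv Rb (Rb m) = m" for m using permutes_inverses(2)[OF Rb] .
  have inP: "(Rb (Suc m), Rb m) \<in> P_set K \<delta> Rb s n"
    if "1 \<le> m" "m < K" "Rb (Suc m) < Rb m" "real_of_int (s (Rb (Suc m)) (Rb m)) \<le> thr \<delta> (n (Rb (Suc m)) (Rb m))" for m
    using that rngRb[of m] rngRb[of "Suc m"] unfolding P_set_def by (simp add: invRb)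
  have inP2: "(Rb m, Rb (Suc m)) \<in> P_set K \<delta> Rb s n"
    if "1 \<le> m" "m < K" "Rb m < Rb (Suc m)" "real_of_int (s (Rb m) (Rb (Suc m))) \<le> thr \<delta> (n (Rb m) (Rb (Suc m)))" for m
    using that rngRb[of m] rngRb[of "Suc m"] unfolding P_set_def by (simp add: invRb)
  have W1: "max (\<alpha> (Rb (Suc m)) - \<alpha> (Rb m)) 0 \<le> w m" if m: "1 \<le> m" "m < K" for m
  proof (cases "Rb (Suc m) < Rb m")
    case True
    have "invd K Rb (Rb m) (Rb (Suc m))" unfolding invd_def using m True
      by (intro exI[of _ m] exI[of _ "Suc m"]) auto
    then have "real_of_int (s (Rb (Suc m)) (Rb m)) \<le> thr \<delta> (n (Rb (Suc m)) (Rb m))"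
      using I unfolding InvP_def by blast
    then have "(Rb (Suc m), Rb m) \<in> P_set K \<delta> Rb s n" using inP m True by blast
    then have "w m = \<alpha> (Rb (Suc m)) - \<alpha> (Rb m)" unfolding w_def g_def using m True by simp
    then show ?thesis using w0[of m] by simp
  next
    case False
    then have "Rb m < Rb (Suc m)" using injRb by (metis injD linorder_neqE_nat n_not_Suc_n)
    then have "\<alpha> (Rb (Suc m)) < \<alpha> (Rb m)" using alpha_dec rngRb[of m] rngRb[of "Suc m"] m by auto
    then show ?thesis using w0[of m] by simp
  qed
  have W2: "max (\<alpha> (Rb m) - \<alpha> (Rb (Suc m))) 0 \<le> w m"
    if m: "1 \<le> m" "m < K" and sc: "real_of_int (s (Rb m) (Rb (Suc m))) \<le> thr \<delta> (n (Rb m) (Rb (Suc m)))" for m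
  proof (cases "Rb m < Rb (Suc m)")
    case True
    then have "(Rb m, Rb (Suc m)) \<in> P_set K \<delta> Rb s n" using inP2 m sc by blast
    then have "w m = \<alpha> (Rb m) - \<alpha> (Rb (Suc m))" unfolding w_def g_def using m True by simp
    then show ?thesis using w0[of m] by simp
  next
    case False
    then have "Rb (Suc m) < Rb m" using injRb by (metis injD linorder_neqE_nat n_not_Suc_n)
    then have "\<alpha> (Rb m) < \<alpha> (Rb (Suc m))" using alpha_dec rngRb[of m] rngRb[of "Suc m"] m by auto
    then show ?thesis using w0[of m] by simp
  qed
  have tele: "\<alpha> (Rb q) - \<alpha> (Rb p) \<le> (\<Sum>m\<in>{p..<q}. w m)" if "p \<le> q" "1 \<le> p" "q \<le> K" for p q
    using that
  proof (induction q rule: dec_induct)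
    case base then show ?case by simp
  next
    case (step q)
    have "\<alpha> (Rb (Suc q)) - \<alpha> (Rb q) \<le> w q" using W1[of q] step by auto
    then show ?case using step by (simp add: sum.atLeastLessThan_Suc)
  qed
  let ?D = "(K - h) div 2"
  let ?P = "Psw \<delta> h Rb s n sel"
  let ?t = "tau h ?D ?P"
  have Rt: "R = Rb \<circ> ?t" unfolding R display_dstep disp_tau ..
  have tperm: "?t permutes {1..K}"
  proof (cases "?D = 0")
    case True then show ?thesis by (metis tau.simps(1) permutes_id)
  next
    case False then have "2 * ?D + h \<le> K" by linarith
    then show ?thesis by (rule tau_permutes)
  qed
  have sum3: "(\<Sum>m\<in>{k-1..<Suc (Suc k)}. w m) = w (k-1) + w k + w (Suc k)" if "1 \<le> k" for k
  proof -
    have g3: "(\<Sum>m\<in>{j..<Suc (Suc (Suc j))}. w m) = w j + w (Suc j) + w (Suc (Suc j))" for j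
      by (simp add: sum.atLeastLessThan_Suc)
    have "Suc (k-1) = k" using that by simp
    then show ?thesis using g3[of "k-1"] by simp
  qed
  have termb: "max (\<alpha> (R (Suc k)) - \<alpha> (R k)) 0 \<le> w (k-1) + w k + w (Suc k)" if k: "1 \<le> k" "k < K" for k
  proof -
    define p where "p = ?t k"
    define q where "q = ?t (Suc k)"
    have pr: "p \<le> Suc k" "k \<le> Suc p" "q \<le> Suc (Suc k)" "Suc k \<le> Suc q"
      using tau_range[of h ?D ?P k] tau_range[of h ?D ?P "Suc k"] unfolding p_def q_def by auto
    have prng: "1 \<le> p \<and> p \<le> K" "1 \<le> q \<and> q \<le> K"
      using perm_range[OF tperm, of k] perm_range[OF tperm, of "Suc k"] k unfolding p_def q_def by auto
    have "p \<noteq> q" using permutes_inj[OF tperm] unfolding p_def q_def by (auto dest: injD)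
    have s3: "0 \<le> w (k-1) + w k + w (Suc k)" using w0 by (simp add: add_nonneg_nonneg)
    have e: "max (\<alpha> (R (Suc k)) - \<alpha> (R k)) 0 = max (\<alpha> (Rb q) - \<alpha> (Rb p)) 0"
      unfolding Rt p_def q_def by simp
    show ?thesis
    proof (cases "p < q")
      case True
      have "\<alpha> (Rb q) - \<alpha> (Rb p) \<le> (\<Sum>m\<in>{p..<q}. w m)" using tele True prng by auto
      also have "\<dots> \<le> (\<Sum>m\<in>{k-1..<Suc (Suc k)}. w m)"
        by (rule sum_mono2) (use pr w0 in auto)
      also have "\<dots> = w (k-1) + w k + w (Suc k)" using sum3 k by simp
      finally show ?thesis using e s3 by simp
    next
      case False
      then have pq: "p = Suc k" "q = k" using pr \<open>p \<noteq> q\<close> by auto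
      then obtain j where j: "1 \<le> j" "j \<le> ?D" "?P j" "k = 2*j-1+h"
        using tau_up[of h ?D ?P k] unfolding p_def by auto
      have "Suc k = 2*j+h" using j by simp
      then have sc: "real_of_int (s (Rb k) (Rb (Suc k))) \<le> thr \<delta> (n (Rb k) (Rb (Suc k)))"
        using j unfolding Psw_def by simp
      have "max (\<alpha> (Rb q) - \<alpha> (Rb p)) 0 \<le> w k" using W2[OF k sc] pq by simp
      then show ?thesis using e w0[of "k-1"] w0[of "Suc k"] by simp
    qed
  qed
  define S where "S = (\<Sum>m\<in>{1..K-1}. w m)"
  have S0: "(\<Sum>m\<in>{0..K}. w m) = S" unfolding S_def
    by (rule sum.mono_neutral_right) (auto simp: w_def)
  have shift: "(\<Sum>k\<in>{1..K-1}. w (f k)) \<le> S" if "inj_on f {1..K-1}" "f ` {1..K-1} \<subseteq> {0..K}" for f :: "nat \<Rightarrow> nat"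
  proof -
    have "(\<Sum>k\<in>{1..K-1}. w (f k)) = (\<Sum>m\<in>f ` {1..K-1}. w m)"
      using sum.reindex[OF that(1), of w] by simp
    also have "\<dots> \<le> (\<Sum>m\<in>{0..K}. w m)" by (rule sum_mono2) (use that w0 in auto)
    finally show ?thesis using S0 by simp
  qed
  have "attr_gap K \<alpha> R = (\<Sum>k=1..K-1. max (\<alpha> (R (Suc k)) - \<alpha> (R k)) 0)"
    unfolding attr_gap_def by simp
  also have "\<dots> \<le> (\<Sum>k=1..K-1. w (k-1) + w k + w (Suc k))"
    by (rule sum_mono) (use termb in auto)
  also have "\<dots> = (\<Sum>k=1..K-1. w (k-1)) + (\<Sum>k=1..K-1. w k) + (\<Sum>k=1..K-1. w (Suc k))"
    by (simp add: sum.distrib)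
  also have "\<dots> \<le> S + S + S"
  proof -
    have a: "(\<Sum>k=1..K-1. w (k-1)) \<le> S" by (rule shift) (auto simp: inj_on_def)
    have b: "(\<Sum>k=1..K-1. w k) \<le> S" unfolding S_def by simp
    have c: "(\<Sum>k=1..K-1. w (Suc k)) \<le> S" by (rule shift) (auto simp: inj_on_def)
    show ?thesis using a b c by linarith
  qed
  also have "\<dots> = 3 * S" by simp
  finally have L: "attr_gap K \<alpha> R \<le> 3 * S" .
  define pi where "pi m = (min (Rb m) (Rb (Suc m)), max (Rb m) (Rb (Suc m)))" for m
  define Sg where "Sg = Sigma {1..K} (\<lambda>i. {i+1..K})"
  have injpi: "inj_on pi {1..K-1}"
    unfolding inj_on_def pi_def
    by (auto simp: inj_eq[OF injRb] min_def max_def split: if_splits)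
  have pisub: "pi ` {1..K-1} \<subseteq> Sg"
  proof
    fix x assume "x \<in> pi ` {1..K-1}"
    then obtain m where m: "1 \<le> m" "m < K" "x = pi m" by auto
    have "Rb m \<noteq> Rb (Suc m)" using injRb by (auto dest: injD)
    then show "x \<in> Sg" using m rngRb[of m] rngRb[of "Suc m"] unfolding Sg_def pi_def by auto
  qed
  have "S = (\<Sum>m\<in>{1..K-1}. case_prod g (pi m))"
    unfolding S_def by (rule sum.cong) (auto simp: w_def pi_def)
  also have "\<dots> = (\<Sum>x\<in>pi ` {1..K-1}. case_prod g x)"
    using sum.reindex[OF injpi, of "case_prod g"] by simp
  also have "\<dots> \<le> (\<Sum>x\<in>Sg. case_prod g x)"
    by (rule sum_mono2) (use pisub g0 in \<open>auto simp: Sg_def\<close>)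
  also have "\<dots> = (\<Sum>i=1..K. \<Sum>j=i+1..K. g i j)"
    unfolding Sg_def by (rule sum.Sigma[symmetric]) auto
  finally have "S \<le> (\<Sum>i=1..K. \<Sum>j=i+1..K. g i j)" .
  then show ?thesis using L unfolding g_def by linarith
qed

lemma final_part:
  fixes \<alpha> :: "nat \<Rightarrow> real"
  assumes R0: "R0 \<in> lists_K K"
    and alpha_dec: "\<forall>i\<in>{1..K}. \<forall>j\<in>{1..K}. i < j \<longrightarrow> \<alpha> j < \<alpha> i"
    and E: "event_E K \<delta> \<alpha> N (s_at K \<delta> R0 coin A X) (n_at K \<delta> R0 coin A X)"
    and t: "t \<in> {1..N}"
    and traj_inv: "\<And>u M. R0 permutes {1..K} \<Longrightarrow> (\<And>u. 1 \<le> u \<Longrightarrow> u \<le> M \<Longrightarrow> E2 K \<delta> (s_at K \<delta> R0 coin A X u) (n_at K \<delta> R0 coin A X u))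
       \<Longrightarrow> u \<le> M \<Longrightarrow> fst (traj K \<delta> R0 coin A X u) permutes {1..K} \<and>
      InvP K \<delta> (fst (traj K \<delta> R0 coin A X u)) (fst (snd (traj K \<delta> R0 coin A X u))) (snd (snd (traj K \<delta> R0 coin A X u)))"
    and disp_perm: "\<And>Rb h s n sel. Rb permutes {1..K} \<Longrightarrow> display_list K \<delta> h Rb s n sel permutes {1..K}"
    and gap_bound: "\<And>Rb s n R h sel. Rb permutes {1..K} \<Longrightarrow> InvP K \<delta> Rb s n \<Longrightarrow> R = display_list K \<delta> h Rb s n sel \<Longrightarrow>
       attr_gap K \<alpha> R \<le> 3 * (\<Sum>i=1..K. \<Sum>j=i+1..K.
                 (if (i, j) \<in> P_set K \<delta> Rb s n then 1 else 0) * (\<alpha> i - \<alpha> j))"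
  shows "Max (attr_gap K \<alpha> ` displayable K \<delta> (t mod 2) (Rbar_at K \<delta> R0 coin A X t)
                 (s_at K \<delta> R0 coin A X (t - 1)) (n_at K \<delta> R0 coin A X (t - 1)))
         \<le> 3 * (\<Sum>i=1..K. \<Sum>j=i+1..K.
                 (if (i, j) \<in> P_set K \<delta> (Rbar_at K \<delta> R0 coin A X t)
                        (s_at K \<delta> R0 coin A X (t - 1)) (n_at K \<delta> R0 coin A X (t - 1))
                  then 1 else 0) * (\<alpha> i - \<alpha> j))"
proof -
  have R0p: "R0 permutes {1..K}" using R0 unfolding lists_K_def by simp
  have E2s: "E2 K \<delta> (s_at K \<delta> R0 coin A X u) (n_at K \<delta> R0 coin A X u)" if "1 \<le> u" "u \<le> N" for u
    using E that unfolding event_E_def E2_def by auto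
  have J: "fst (traj K \<delta> R0 coin A X (t-1)) permutes {1..K} \<and>
      InvP K \<delta> (fst (traj K \<delta> R0 coin A X (t-1))) (fst (snd (traj K \<delta> R0 coin A X (t-1)))) (snd (snd (traj K \<delta> R0 coin A X (t-1))))"
    using traj_inv[OF R0p E2s] t by auto
  define Rb where "Rb = Rbar_at K \<delta> R0 coin A X t"
  define s where "s = s_at K \<delta> R0 coin A X (t - 1)"
  define n where "n = n_at K \<delta> R0 coin A X (t - 1)"
  have Rbp: "Rb permutes {1..K}" and IP: "InvP K \<delta> Rb s n"
    using J unfolding Rb_def s_def n_def Rbar_at_def s_at_def n_at_def by auto
  let ?A = "displayable K \<delta> (t mod 2) Rb s n"
  have sub: "?A \<subseteq> {p. p permutes {1..K}}"
    unfolding displayable_def using disp_perm[OF Rbp] by auto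
  have fin: "finite ?A" by (rule finite_subset[OF sub finite_permutations]) simp
  have ne: "?A \<noteq> {}" unfolding displayable_def by auto
  have "Max (attr_gap K \<alpha> ` ?A) \<le> 3 * (\<Sum>i=1..K. \<Sum>j=i+1..K.
                 (if (i, j) \<in> P_set K \<delta> Rb s n then 1 else 0) * (\<alpha> i - \<alpha> j))"
  proof (rule Max.boundedI)
    show "finite (attr_gap K \<alpha> ` ?A)" using fin by simp
    show "attr_gap K \<alpha> ` ?A \<noteq> {}" using ne by simp
    fix x assume "x \<in> attr_gap K \<alpha> ` ?A"
    then obtain sel where "x = attr_gap K \<alpha> (display_list K \<delta> (t mod 2) Rb s n sel)"
      unfolding displayable_def by auto
    then show "x \<le> 3 * (\<Sum>i=1..K. \<Sum>j=i+1..K.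
                 (if (i, j) \<in> P_set K \<delta> Rb s n then 1 else 0) * (\<alpha> i - \<alpha> j))"
      using gap_bound[OF Rbp IP refl] by simp
  qed
  then show ?thesis unfolding Rb_def s_def n_def .
qed

theorem lemma3:
  fixes K N :: nat and \<delta> :: real
    and \<alpha> :: "nat \<Rightarrow> real" and \<chi> :: "(nat \<Rightarrow> nat) \<Rightarrow> nat \<Rightarrow> real"
    and R0 :: "nat \<Rightarrow> nat"
    and coin :: "nat \<Rightarrow> nat \<Rightarrow> bool"
    and A :: "nat \<Rightarrow> nat \<Rightarrow> bool"
    and X :: "nat \<Rightarrow> (nat \<Rightarrow> nat) \<Rightarrow> nat \<Rightarrow> bool"
  assumes delta: "0 < \<delta>" "\<delta> < 1"
    and R0: "R0 \<in> lists_K K"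
    and alpha_dec: "\<forall>i\<in>{1..K}. \<forall>j\<in>{1..K}. i < j \<longrightarrow> \<alpha> j < \<alpha> i"
    and alpha_pos: "\<alpha> K > 0"
    and alpha_le1: "\<forall>i\<in>{1..K}. \<alpha> i \<le> 1"
    and chi_range: "\<forall>R\<in>lists_K K. \<forall>k\<in>{1..K}. 0 \<le> \<chi> R k \<and> \<chi> R k \<le> 1"
    and A1: "\<forall>R\<in>lists_K K. reward K \<alpha> \<chi> R \<le> reward K \<alpha> \<chi> id"
    and A2: "\<forall>R\<in>lists_K K. \<forall>R'\<in>lists_K K. \<forall>k\<in>{1..K}.
               R ` {1..<k} = R' ` {1..<k} \<longrightarrow> \<chi> R k = \<chi> R' k"
    and A3: "\<forall>R\<in>lists_K K. \<forall>k\<in>{1..K}. \<forall>l\<in>{1..K}. k < l \<longrightarrow> \<chi> R l \<le> \<chi> R k"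
    and A4: "\<forall>R\<in>lists_K K. \<forall>k\<in>{1..K}. \<forall>l\<in>{1..K}. k < l \<longrightarrow>
               (\<alpha> (R k) \<le> \<alpha> (R l) \<longleftrightarrow> \<chi> (swap_pos R k l) l \<le> \<chi> R l)"
    and A5: "\<forall>R\<in>lists_K K. \<forall>k\<in>{1..K}. \<chi> id k \<le> \<chi> R k"
    and E: "event_E K \<delta> \<alpha> N (s_at K \<delta> R0 coin A X) (n_at K \<delta> R0 coin A X)"
    and t: "t \<in> {1..N}"
  shows "Max (attr_gap K \<alpha> ` displayable K \<delta> (t mod 2) (Rbar_at K \<delta> R0 coin A X t)
                 (s_at K \<delta> R0 coin A X (t - 1)) (n_at K \<delta> R0 coin A X (t - 1)))
         \<le> 3 * (\<Sum>i=1..K. \<Sum>j=i+1..K.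
                 (if (i, j) \<in> P_set K \<delta> (Rbar_at K \<delta> R0 coin A X t)
                        (s_at K \<delta> R0 coin A X (t - 1)) (n_at K \<delta> R0 coin A X (t - 1))
                  then 1 else 0) * (\<alpha> i - \<alpha> j))"
  by (rule final_part[OF R0 alpha_dec E t traj_inv disp_perm gap_bound[OF _ _ alpha_dec]])

end
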